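(* Let $W\in\{\mathrm{A}_{\frac12\infty},\mathrm{D}_{\frac12\infty}\}$ and $X_{W,t}=f_W^{-1}(t)\subset\mathbb{C}^2$. Then the restriction $f_W:\mathbb{C}^2\setminus(X_{W,0}\cup X_{W,1})\to\mathbb{C}\setminus\{0,1\}$ is a topologically locally trivial fibration.
   Context: Let $s(x)=\frac{\sin\sqrt{x}}{\sqrt{x}}$ and $c(x)=\cos\sqrt{x}$ (entire functions of $x$). Define $f_{\mathrm{A}_{\frac12\infty}}(x,y)=xs(x)^2-y^2=1-c(x)^2-y^2$ and $f_{\mathrm{D}_{\frac12\infty}}(x,y)=xs(x)^2-xy^2=1-c(x)^2-xy^2$ on $\mathbb{C}^2$. *)

theory Defs
  imports "HOL-Analysis.Analysis"
begin

text \<open>s(x) = sin(sqrt x)/sqrt x, extended by its limit 1 at x = 0 (entire; independent of the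
  branch of the square root since sin(z)/z is even).\<close>
definition s_fun :: "complex \<Rightarrow> complex" where
  "s_fun x = (if x = 0 then 1 else sin (csqrt x) / csqrt x)"

text \<open>c(x) = cos(sqrt x) (independent of the branch since cos is even).\<close>
definition c_fun :: "complex \<Rightarrow> complex" where
  "c_fun x = cos (csqrt x)"

definition f_A :: "complex \<times> complex \<Rightarrow> complex" where
  "f_A p = fst p * (s_fun (fst p))\<^sup>2 - (snd p)\<^sup>2"

definition f_D :: "complex \<times> complex \<Rightarrow> complex" where
  "f_D p = fst p * (s_fun (fst p))\<^sup>2 - fst p * (snd p)\<^sup>2"

text \<open>The typical fibre F is taken as a subspace of the ambient space of E
  (any fibre is a subspace of E, so this is no restriction).\<close>
definition locally_trivial_fibration ::
  "('a::topological_space \<Rightarrow> 'b::topological_space) \<Rightarrow> 'a set \<Rightarrow> 'b set \<Rightarrow> bool" where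
  "locally_trivial_fibration f E B \<longleftrightarrow>
     f ` E \<subseteq> B \<and> continuous_on E f \<and>
     (\<forall>b\<in>B. \<exists>U (F::'a set) h k.
        openin (top_of_set B) U \<and> b \<in> U \<and>
        homeomorphism {p \<in> E. f p \<in> U} (U \<times> F) h k \<and>
        (\<forall>p \<in> {p \<in> E. f p \<in> U}. fst (h p) = f p))"

end

theory Submission
  imports Defs "HOL-Complex_Analysis.Complex_Analysis"
begin


definition TT :: "complex set" where "TT = range (\<lambda>k::int. of_int k * of_real pi)"

lemma TT_ne: "TT \<noteq> {}" by (simp add: TT_def)

lemma TT_closed: "closed TT"
proof (rule discrete_imp_closed[of pi])
  show "0 < pi" by simp
  show "\<forall>x\<in>TT. \<forall>y\<in>TT. dist y x < pi \<longrightarrow> y = x"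
  proof (clarsimp simp: TT_def)
    fix k j :: int
    assume "dist (of_int j * complex_of_real pi) (of_int k * complex_of_real pi) < pi"
    then have "norm (of_real (of_int (j - k) * pi) :: complex) < pi" 
      by (simp add: dist_norm algebra_simps)
    then have "\<bar>of_int (j - k)\<bar> * pi < 1 * pi" by (simp only: norm_of_real abs_mult) simp
    then have "\<bar>of_int (j - k)\<bar> < (1::real)" by (simp only: mult_less_cancel_right) (auto)
    then show "j = k" by linarith
  qed
qed

lemma TT_uminus: "w \<in> TT \<Longrightarrow> - w \<in> TT"
  apply (auto simp: TT_def)
  subgoal for k by (rule range_eqI[of _ _ "- k"]) simp
  done

lemma TT_diff: "w \<in> TT \<Longrightarrow> v \<in> TT \<Longrightarrow> w - v \<in> TT"
  apply (auto simp: TT_def)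
  subgoal for k j by (rule range_eqI[of _ _ "k - j"]) (simp add: algebra_simps)
  done

lemma sin_zero_TT: "sin w = 0 \<longleftrightarrow> w \<in> TT"
  by (auto simp: sin_eq_0 TT_def)

lemma infdist_uminus_TT: "infdist (- w) TT = infdist w TT"
proof -
  have *: "infdist (- w) TT \<le> infdist w TT" for w
  proof -
    obtain t where t: "t \<in> TT" "infdist w TT = dist w t"
      using infdist_attains_inf[OF TT_closed TT_ne] by metis
    have "infdist (- w) TT \<le> dist (-w) (-t)" by (rule infdist_le) (rule TT_uminus[OF t(1)])
    also have "\<dots> = dist w t" by (simp add: dist_norm norm_minus_commute) 
    finally show ?thesis using t by simp
  qed
  show ?thesis using *[of w] *[of "-w"] by simp
qed

lemma sin_ge_half: "0 \<le> x \<Longrightarrow> x \<le> pi/3 \<Longrightarrow> x/2 \<le> sin (x::real)"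
proof -
  assume x: "0 \<le> x" "x \<le> pi/3"
  let ?f = "\<lambda>x. sin x - x/2"
  have "?f 0 \<le> ?f x"
  proof (rule DERIV_nonneg_imp_nondecreasing[OF x(1)])
    fix u assume u: "0 \<le> u" "u \<le> x"
    have d: "(?f has_real_derivative cos u - 1/2) (at u)"
      by (auto intro!: derivative_eq_intros)
    have "cos (pi/3) \<le> cos u" using x u by (intro cos_monotone_0_pi_le) auto
    then have "0 \<le> cos u - 1/2" by (simp add: cos_60)
    with d show "\<exists>y. (?f has_real_derivative y) (at u) \<and> 0 \<le> y" by blast
  qed
  then show ?thesis by simp
qed

lemma abs_sin_lower: 
  assumes "0 < \<rho>" "\<rho> \<le> 1" "\<rho> \<le> \<bar>u\<bar>" "\<bar>u\<bar> \<le> pi/2"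
  shows "\<rho>/2 \<le> \<bar>sin (u::real)\<bar>"
proof -
  have *: "\<rho>/2 \<le> sin v" if v: "\<rho> \<le> v" "v \<le> pi/2" for v
  proof (cases "v \<le> pi/3")
    case True then show ?thesis using sin_ge_half[of v] v assms by auto
  next
    case False
    then have "sin (pi/3) \<le> sin v" using v by (intro sin_monotone_2pi_le) auto
    then have "sqrt 3 \<le> sin v * 2" by (simp add: sin_60)
    moreover have "(1::real) \<le> sqrt 3" by simp
    ultimately show ?thesis using assms by linarith
  qed
  show ?thesis
  proof (cases "u \<ge> 0")
    case True then show ?thesis using *[of u] assms by auto
  next
    case False then show ?thesis using *[of "-u"] assms by auto
  qed
qed

lemma norm_sin_lower:
  fixes w :: complex
  assumes "0 < \<rho>" "\<rho> \<le> 1" "\<rho> \<le> infdist w TT"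
  shows "\<rho>/4 \<le> norm (sin w)"
proof -
  define a where "a = Re w"
  define b where "b = Im w"
  define k where "k = \<lfloor>a / pi + 1/2\<rfloor>"
  define u where "u = a - of_int k * pi"
  have k1: "of_int k \<le> a/pi + 1/2" "a/pi + 1/2 < of_int k + 1" unfolding k_def by linarith+
  have "(a/pi - 1/2) * pi < of_int k * pi" using k1 by (intro mult_strict_right_mono) auto
  moreover have "of_int k * pi \<le> (a/pi + 1/2) * pi" using k1 by (intro mult_right_mono) auto
  moreover have "(a/pi - 1/2) * pi = a - pi/2" "(a/pi + 1/2) * pi = a + pi/2" by (simp_all add: field_simps)
  ultimately have u1: "\<bar>u\<bar> \<le> pi/2" unfolding u_def by linarith
  have tin: "of_int k * of_real pi \<in> TT" unfolding TT_def by (rule rangeI)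
  have "\<rho> \<le> dist w (of_int k * of_real pi)" using assms(3) infdist_le[OF tin, of w] by linarith
  also have "\<dots> = norm (Complex u b)"
  proof -
    have "w - of_int k * of_real pi = Complex u b" by (simp add: complex_eq_iff u_def a_def b_def)
    then show ?thesis by (simp add: dist_norm)
  qed
  finally have "\<rho>^2 \<le> (norm (Complex u b))^2" using assms(1) by (intro power_mono) auto
  then have rho_le: "\<rho>^2 \<le> u^2 + b^2" by (simp add: cmod_power2)
  have ns: "norm (sin w) ^ 2 = (exp (2*b) + inverse (exp (2*b)) - 2 * cos (2*a)) / 4"
    unfolding a_def b_def by (rule norm_sin_squared)
  have e1: "exp (2*\<bar>b\<bar>) + inverse (exp (2*\<bar>b\<bar>)) \<ge> 2 + 2 * b^2"
  proof -
    have "1 + 2*\<bar>b\<bar> + (2*\<bar>b\<bar>)^2/2 \<le> exp (2*\<bar>b\<bar>)" by (rule exp_lower_Taylor_quadratic) simp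
    moreover have "1 - 2*\<bar>b\<bar> \<le> exp (-(2*\<bar>b\<bar>))" using exp_ge_add_one_self[of "-(2*\<bar>b\<bar>)"] by simp
    moreover have "(2*\<bar>b\<bar>)^2/2 = 2 * b^2" by (simp add: power2_eq_square)
    moreover have "inverse (exp (2*\<bar>b\<bar>)) = exp (-(2*\<bar>b\<bar>))" by (simp add: exp_minus)
    ultimately show ?thesis by linarith
  qed
  have e2: "exp (2*\<bar>b\<bar>) + inverse (exp (2*\<bar>b\<bar>)) = exp (2*b) + inverse (exp (2*b))"
  proof (cases "b \<ge> 0")
    case True then have "\<bar>b\<bar> = b" by simp
    then show ?thesis by (simp only:)
  next
    case False then have "2*\<bar>b\<bar> = - (2*b)" by simp
    then show ?thesis by (simp add: exp_minus)
  qed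
  have cs: "cos (2*a) = 1 - 2 * (sin u)^2"
  proof -
    have sk: "sin (of_int k * pi) = 0" by (auto simp: sin_zero_iff_int2)
    have "sin u = sin a * cos (of_int k * pi) - cos a * sin (of_int k * pi)" unfolding u_def by (rule sin_diff)
    also have "\<dots> = sin a * cos (of_int k * pi)" using sk by simp
    finally have "(sin u)^2 = (sin a)^2 * (cos (of_int k * pi))^2" by (simp add: power_mult_distrib)
    also have "(cos (of_int k * pi))^2 = 1" by (simp add: cos_squared_eq sk)
    finally have "sin a ^ 2 = sin u ^ 2" by simp
    then show ?thesis by (simp add: cos_double_sin)
  qed
  have low: "norm (sin w) ^ 2 \<ge> b^2/2 + (sin u)^2"
  proof -
    have "2 + 2*b^2 \<le> exp(2*b)+inverse(exp(2*b))" using e1 e2 by simp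
    then show ?thesis unfolding ns cs by (simp add: field_simps)
  qed
  show ?thesis
  proof (cases "\<rho>/2 \<le> \<bar>b\<bar>")
    case True
    then have "(\<rho>/2)^2 \<le> \<bar>b\<bar>^2" using assms by (intro power_mono) auto
    moreover have "(\<rho>/4)^2 = \<rho>^2/16" "(\<rho>/2)^2 = \<rho>^2/4" by (simp_all add: power_divide)
    ultimately have "(\<rho>/4)^2 \<le> norm (sin w)^2" using low zero_le_power2[of "sin u"] zero_le_power2[of "norm (sin w)"] power2_abs[of b] by linarith
    then show ?thesis by (rule power2_le_imp_le) simp
  next
    case False
    then have "\<bar>b\<bar>^2 \<le> (\<rho>/2)^2" by (intro power_mono) auto
    then have "\<rho>^2 \<le> u^2 + (\<rho>/2)^2" using rho_le by simp
    moreover have "(\<rho>/2)^2 = \<rho>^2/4" by (simp add: power_divide)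
    ultimately have "(\<rho>/2)^2 \<le> \<bar>u\<bar>^2" using zero_le_power2[of \<rho>] power2_abs[of u] by linarith
    then have "\<rho>/2 \<le> \<bar>u\<bar>" by (rule power2_le_imp_le) simp
    then have "\<rho>/2/2 \<le> \<bar>sin u\<bar>" using abs_sin_lower[of "\<rho>/2" u] u1 assms by auto
    then have "(\<rho>/4)^2 \<le> \<bar>sin u\<bar>^2" using assms by (intro power_mono) auto
    then have "(\<rho>/4)^2 \<le> norm (sin w)^2" using low zero_le_power2[of b] power2_abs[of "sin u"] by linarith
    then show ?thesis by (rule power2_le_imp_le) simp
  qed
qed




locale geo =
  fixes b :: complex and r :: real
  assumes r_pos: "0 < r" and r_le1: "r \<le> 1"
    and sep2: "4 * r \<le> infdist (2 * b) TT" and sep1: "3 * r \<le> infdist b TT"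
begin

definition phi :: "real \<Rightarrow> real" where "phi s = max 0 (min 1 (2 - s / r))"
definition dp :: "complex \<Rightarrow> real" where "dp z = infdist (z - b) TT"
definition dm :: "complex \<Rightarrow> real" where "dm z = infdist (z + b) TT"
definition chi :: "complex \<Rightarrow> real" where "chi z = phi (dp z) - phi (dm z)"
definition rho :: "complex \<Rightarrow> complex \<Rightarrow> complex" where "rho d z = z + d * of_real (chi z)"
definition sig :: "complex \<Rightarrow> complex \<Rightarrow> complex" where "sig d w = (THE z. rho d z = w)"

lemma phi_lip: "\<bar>phi s - phi s'\<bar> \<le> \<bar>s - s'\<bar> / r"
proof -
  have "\<bar>phi s - phi s'\<bar> \<le> \<bar>(2 - s/r) - (2 - s'/r)\<bar>"
    unfolding phi_def by (auto simp: max_def min_def abs_if)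
  also have "(2 - s/r) - (2 - s'/r) = (s' - s)/r" using r_pos by (simp add: field_simps)
  also have "\<bar>(s' - s)/r\<bar> = \<bar>s - s'\<bar>/r" using r_pos by simp
  finally show ?thesis .
qed

lemma phi_one: "s \<le> r \<Longrightarrow> phi s = 1"
  unfolding phi_def using r_pos by (auto simp: field_simps)

lemma phi_zero: "2 * r \<le> s \<Longrightarrow> phi s = 0"
  unfolding phi_def using r_pos by (auto simp: field_simps)

lemma phi_one_iff: "phi s = 1 \<Longrightarrow> s \<le> r"
  unfolding phi_def using r_pos by (auto simp: field_simps max_def min_def split: if_splits)

lemma phi_bounds: "0 \<le> phi s" "phi s \<le> 1"
  unfolding phi_def by auto

lemma dp_dm_sum: "4 * r \<le> dp z + dm z"
proof -
  obtain t1 where t1: "t1 \<in> TT" "dp z = dist (z - b) t1"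
    using infdist_attains_inf[OF TT_closed TT_ne] unfolding dp_def by metis
  obtain t2 where t2: "t2 \<in> TT" "dm z = dist (z + b) t2"
    using infdist_attains_inf[OF TT_closed TT_ne] unfolding dm_def by metis
  have "infdist (2 * b) TT \<le> dist (2 * b) (t2 - t1)" by (rule infdist_le[OF TT_diff[OF t2(1) t1(1)]])
  also have eq: "2 * b - (t2 - t1) = (z + b - t2) - (z - b - t1)" by (simp add: algebra_simps)
  have "dist (2 * b) (t2 - t1) = norm ((z + b - t2) - (z - b - t1))" by (simp only: dist_norm eq)
  also have "\<dots> \<le> norm (z + b - t2) + norm (z - b - t1)" by (rule norm_triangle_ineq4)
  finally show ?thesis using sep2 t1 t2 by (simp add: dist_norm)
qed

lemma chi_one: "dp z \<le> r \<Longrightarrow> chi z = 1"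
proof -
  assume a: "dp z \<le> r"
  then have "2 * r \<le> dm z" using dp_dm_sum[of z] r_pos by linarith
  then show ?thesis using a by (simp add: chi_def phi_one phi_zero)
qed

lemma chi_mone: "dm z \<le> r \<Longrightarrow> chi z = -1"
proof -
  assume a: "dm z \<le> r"
  then have "2 * r \<le> dp z" using dp_dm_sum[of z] r_pos by linarith
  then show ?thesis using a by (simp add: chi_def phi_one phi_zero)
qed

lemma chi_ne_one: "chi z \<noteq> 1 \<Longrightarrow> r < dp z"
  using chi_one by force

lemma chi_zero: "norm z < r \<Longrightarrow> chi z = 0"
proof -
  assume z: "norm z < r"
  have "infdist (- b) TT \<le> infdist (z - b) TT + dist (- b) (z - b)" by (rule infdist_triangle)
  moreover have "infdist b TT \<le> infdist (z + b) TT + dist b (z + b)" by (rule infdist_triangle)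
  moreover have "dist (- b) (z - b) = norm z" by (simp add: dist_norm norm_minus_commute)
  moreover have "dist b (z + b) = norm z" by (simp add: dist_norm norm_minus_commute)
  moreover have "infdist (- b) TT = infdist b TT" by (rule infdist_uminus_TT)
  ultimately have "2 * r \<le> dp z" "2 * r \<le> dm z" using sep1 z unfolding dp_def dm_def by linarith+
  then show ?thesis by (simp add: chi_def phi_zero)
qed

lemma chi_odd: "chi (- z) = - chi z"
proof -
  have "- z - b = - (z + b)" "- z + b = - (z - b)" by simp_all
  then have "dp (- z) = dm z" "dm (- z) = dp z" unfolding dp_def dm_def
    by (simp_all only: infdist_uminus_TT)
  then show ?thesis by (simp add: chi_def)
qed

lemma chi_lip: "\<bar>chi z - chi w\<bar> \<le> 2 / r * norm (z - w)"
proof -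
  have "\<bar>dp z - dp w\<bar> \<le> norm (z - w)" unfolding dp_def
    using infdist_triangle_abs[of "z - b" TT "w - b"] by (simp add: dist_norm)
  moreover have "\<bar>dm z - dm w\<bar> \<le> norm (z - w)" unfolding dm_def
    using infdist_triangle_abs[of "z + b" TT "w + b"] by (simp add: dist_norm)
  moreover have "\<bar>phi (dp z) - phi (dp w)\<bar> \<le> \<bar>dp z - dp w\<bar> / r" by (rule phi_lip)
  moreover have "\<bar>phi (dm z) - phi (dm w)\<bar> \<le> \<bar>dm z - dm w\<bar> / r" by (rule phi_lip)
  ultimately have "\<bar>phi (dp z) - phi (dp w)\<bar> \<le> norm (z - w) / r" "\<bar>phi (dm z) - phi (dm w)\<bar> \<le> norm (z - w) / r"
    using r_pos by (meson divide_right_mono order_trans less_imp_le)+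
  then show ?thesis unfolding chi_def by (simp add: field_simps)
qed

lemma chi_bound: "\<bar>chi z\<bar> \<le> 1"
  using phi_bounds[of "dp z"] phi_bounds[of "dm z"] by (simp add: chi_def)

lemma chi_cont: "continuous_on UNIV chi"
  unfolding chi_def phi_def dp_def dm_def by (intro continuous_intros) (use r_pos in auto)

lemma rho_odd: "rho d (- z) = - rho d z"
  by (simp add: rho_def chi_odd)

lemma rho_zero: "rho d 0 = 0"
  using rho_odd[of d 0] by simp

lemma rho_small: "norm z < r \<Longrightarrow> rho d z = z"
  by (simp add: rho_def chi_zero)

lemma rho_lower:
  assumes d: "norm d \<le> r/4"
  shows "norm (z - w) / 2 \<le> norm (rho d z - rho d w)"
proof -
  have "norm (d * of_real (chi z - chi w)) = norm d * \<bar>chi z - chi w\<bar>" by (simp only: norm_mult norm_of_real)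
  also have "\<dots> \<le> r/4 * (2 / r * norm (z - w))"
    by (rule mult_mono[OF d chi_lip]) (use r_pos in auto)
  also have "\<dots> = norm (z - w) / 2" using r_pos by simp
  finally have *: "norm (d * of_real (chi z - chi w)) \<le> norm (z - w) / 2" .
  have "rho d z - rho d w = (z - w) + d * of_real (chi z - chi w)"
    by (simp add: rho_def algebra_simps)
  then have "norm (z - w) - norm (d * of_real (chi z - chi w)) \<le> norm (rho d z - rho d w)"
    by (metis norm_diff_ineq)
  with * show ?thesis by linarith
qed

lemma rho_inj: "norm d \<le> r/4 \<Longrightarrow> rho d z = rho d w \<Longrightarrow> z = w"
  using rho_lower[of d z w] by simp

lemma rho_surj:
  assumes d: "norm d \<le> r/4"
  shows "\<exists>z. rho d z = w"
proof -
  have "\<exists>!z. (\<lambda>z. w - d * of_real (chi z)) z = z"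
  proof (rule banach_fix_type[of "1/2"])
    show "\<forall>x y. dist (w - d * of_real (chi x)) (w - d * of_real (chi y)) \<le> 1/2 * dist x y"
    proof (intro allI)
      fix x y
      have "dist (w - d * of_real (chi x)) (w - d * of_real (chi y)) = norm d * \<bar>chi x - chi y\<bar>"
      proof -
        have "(w - d * of_real (chi x)) - (w - d * of_real (chi y)) = - (d * of_real (chi x - chi y))" by (simp add: algebra_simps)
        then show ?thesis by (simp only: dist_norm norm_minus_cancel norm_mult norm_of_real)
      qed
      also have "\<dots> \<le> r/4 * (2 / r * norm (x - y))"
        by (rule mult_mono[OF d chi_lip]) (use r_pos in auto)
      also have "\<dots> = 1/2 * dist x y" using r_pos by (simp add: dist_norm)
      finally show "dist (w - d * of_real (chi x)) (w - d * of_real (chi y)) \<le> 1/2 * dist x y" .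
    qed
  qed auto
  then obtain z where "w - d * of_real (chi z) = z" by auto
  then have "rho d z = w" by (simp add: rho_def algebra_simps)
  then show ?thesis by blast
qed

lemma rho_sig: "norm d \<le> r/4 \<Longrightarrow> rho d (sig d w) = w"
  unfolding sig_def by (rule theI') (use rho_surj rho_inj in blast)

lemma sig_rho: "norm d \<le> r/4 \<Longrightarrow> sig d (rho d z) = z"
  unfolding sig_def
proof (rule the_equality)
  fix y assume "norm d \<le> r/4" "rho d y = rho d z"
  then show "y = z" by (rule rho_inj)
qed simp

lemma sig_odd: "norm d \<le> r/4 \<Longrightarrow> sig d (- w) = - sig d w"
  by (metis rho_odd rho_sig sig_rho)

lemma sig_lip:
  assumes d: "norm d \<le> r/4" and d': "norm d' \<le> r/4"
  shows "norm (sig d w - sig d' w') \<le> 2 * (norm (w - w') + norm (d - d'))"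
proof -
  define z where "z = sig d w"
  define z' where "z' = sig d' w'"
  have w: "w = z + d * of_real (chi z)" using rho_sig[OF d, of w] by (simp add: z_def rho_def)
  have w': "w' = z' + d' * of_real (chi z')" using rho_sig[OF d', of w'] by (simp add: z'_def rho_def)
  have eq: "z - z' = (w - w') - d * of_real (chi z - chi z') - (d - d') * of_real (chi z')"
    by (simp add: w w' algebra_simps)
  have n1: "norm (d * of_real (chi z - chi z')) \<le> norm (z - z') / 2"
  proof -
    have "norm (d * of_real (chi z - chi z')) = norm d * \<bar>chi z - chi z'\<bar>" by (simp only: norm_mult norm_of_real)
    also have "\<dots> \<le> r/4 * (2 / r * norm (z - z'))"
      by (rule mult_mono[OF d chi_lip]) (use r_pos in auto)
    also have "\<dots> = norm (z - z') / 2" using r_pos by simp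
    finally show ?thesis .
  qed
  have n2: "norm ((d - d') * of_real (chi z')) \<le> norm (d - d')"
    using chi_bound[of z'] by (simp add: norm_mult mult_left_le)
  have tri: "norm (z - z') \<le> norm (w - w') + norm (d * of_real (chi z - chi z')) + norm ((d - d') * of_real (chi z'))"
    unfolding eq by (metis (no_types, lifting) add_mono norm_triangle_ineq4 order_refl order_trans)
  have ar: "\<And>X Y Z A B::real. X \<le> A + Y + Z \<Longrightarrow> Y \<le> X/2 \<Longrightarrow> Z \<le> B \<Longrightarrow> X \<le> 2*(A+B)" by argo
  have "norm (z - z') \<le> 2 * (norm (w - w') + norm (d - d'))" by (rule ar[OF tri n1 n2])
  then show ?thesis by (simp only: z_def z'_def)
qed

lemma sig_cont: "continuous_on (cball 0 (r/4) \<times> UNIV) (\<lambda>p. sig (fst p) (snd p))"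
proof (rule continuous_on_iff[THEN iffD2], intro ballI allI impI)
  fix p :: "complex \<times> complex" and e :: real
  assume p: "p \<in> cball 0 (r/4) \<times> UNIV" and e: "0 < e"
  show "\<exists>\<delta>>0. \<forall>p'\<in>cball 0 (r/4) \<times> UNIV. dist p' p < \<delta> \<longrightarrow> dist (sig (fst p') (snd p')) (sig (fst p) (snd p)) < e"
  proof (intro exI[of _ "e/4"] conjI ballI impI)
    show "0 < e/4" using e by simp
  next
    fix p' assume p': "p' \<in> cball 0 (r/4) \<times> UNIV" and dd: "dist p' p < e/4"
    have d: "norm (fst p) \<le> r/4" and d': "norm (fst p') \<le> r/4" using p p' by auto
    have "norm (snd p' - snd p) < e/4" "norm (fst p' - fst p) < e/4"
      using dd dist_fst_le[of p' p] dist_snd_le[of p' p] by (simp_all add: dist_norm)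
    then show "dist (sig (fst p') (snd p')) (sig (fst p) (snd p)) < e"
      using sig_lip[OF d' d, of "snd p'" "snd p"] by (simp add: dist_norm)
  qed
qed

end



lemma sin_sq_diff: "sin (u::complex) ^ 2 - sin v ^ 2 = sin (u - v) * sin (u + v)"
proof -
  have "sin (u - v) * sin (u + v) = (sin u * cos v - cos u * sin v) * (sin u * cos v + cos u * sin v)"
    by (simp add: sin_diff sin_add)
  also have "\<dots> = sin u ^2 * cos v ^2 - cos u ^2 * sin v ^2" by (simp add: algebra_simps power2_eq_square)
  also have "\<dots> = sin u ^ 2 - sin v ^ 2" by (simp add: cos_squared_eq algebra_simps)
  finally show ?thesis by simp
qed

lemma norm_cos_le_sin: "norm (cos (w::complex)) \<le> 1 + norm (sin w)"
proof -
  have "norm (cos w) ^ 2 = norm (1 - sin w ^ 2)" by (simp add: cos_squared_eq flip: norm_power)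
  also have "\<dots> \<le> 1 + norm (sin w) ^ 2" by (metis norm_one norm_power norm_triangle_ineq4)
  also have "\<dots> \<le> (1 + norm (sin w)) ^ 2" by (simp add: power2_eq_square algebra_simps)
  finally show ?thesis by (rule power2_le_imp_le) simp
qed

lemma not_nonpos_if_near1: "norm (a - 1) < 1 \<Longrightarrow> (a::complex) \<notin> \<real>\<^sub>\<le>\<^sub>0"
proof
  assume a: "norm (a - 1) < 1" "a \<in> \<real>\<^sub>\<le>\<^sub>0"
  then have "Re a \<le> 0" by (simp add: complex_nonpos_Reals_iff)
  moreover have "\<bar>Re (a - 1)\<bar> \<le> norm (a - 1)" by (rule abs_Re_le_cmod)
  ultimately show False using a(1) by simp
qed

lemma isCont_pt_snd: assumes "isCont f (snd p)" shows "isCont (\<lambda>q. f (snd q)) p"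
proof -
  have "isCont snd p" by (intro continuous_intros)
  from isCont_o2[OF this assms] show ?thesis .
qed

context geo begin

definition AA :: "complex \<Rightarrow> complex \<Rightarrow> complex" where
  "AA d z = (if sin (z - b) = 0 then 1 else sin (z - b + d * of_real (chi z - 1)) / sin (z - b))"

lemma chi_at_TT: "sin (z - b) = 0 \<Longrightarrow> chi z = 1"
  by (rule chi_one) (use r_pos in \<open>simp add: dp_def sin_zero_TT\<close>)

lemma AA_id: "sin (rho d z - (b + d)) = AA d z * sin (z - b)"
proof (cases "sin (z - b) = 0")
  case True
  then show ?thesis using chi_at_TT[OF True] by (simp add: rho_def AA_def)
next
  case False
  have e: "rho d z - (b + d) = z - b + d * of_real (chi z - 1)" by (simp add: rho_def algebra_simps)
  show ?thesis using False by (simp only: e AA_def if_False) simp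
qed

lemma AA_id2: "sin (rho d z + (b + d)) = AA d (- z) * sin (z + b)"
proof -
  have "sin (rho d (-z) - (b + d)) = AA d (-z) * sin (-z - b)" by (rule AA_id)
  moreover have "rho d (-z) - (b + d) = - (rho d z + (b + d))" by (simp add: rho_odd)
  moreover have "-z - b = - (z + b)" by simp
  ultimately show ?thesis by (simp only: sin_minus) simp
qed

lemma key_identity:
  "sin (rho d z) ^ 2 - sin (b + d) ^ 2 = AA d z * AA d (-z) * (sin z ^ 2 - sin b ^ 2)"
  by (simp add: sin_sq_diff AA_id AA_id2)

lemma chi_cont_at: "isCont chi x"
  using chi_cont continuous_on_eq_continuous_at open_UNIV by blast

lemma dp_cont: "continuous_on UNIV dp"
  unfolding dp_def by (intro continuous_intros)

lemma AA_cont: "isCont (\<lambda>p. AA (fst p) (snd p)) p"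
proof (cases "sin (snd p - b) = 0")
  case True
  then have "dp (snd p) = 0" by (simp add: dp_def sin_zero_TT)
  have "open {q::complex\<times>complex. dp (snd q) < r}"
    by (rule open_Collect_less) (intro continuous_intros continuous_on_compose2[OF dp_cont], auto)
  moreover have "p \<in> {q. dp (snd q) < r}" using \<open>dp (snd p) = 0\<close> r_pos by simp
  ultimately have ev: "eventually (\<lambda>q. dp (snd q) < r) (nhds p)"
    using eventually_nhds_in_open by fastforce
  have "eventually (\<lambda>q. AA (fst q) (snd q) = 1) (nhds p)"
    by (rule eventually_mono[OF ev]) (simp add: AA_def chi_one)
  then have "isCont (\<lambda>q. AA (fst q) (snd q)) p \<longleftrightarrow> isCont (\<lambda>q. 1::complex) p"
    by (rule isCont_cong)
  then show ?thesis by simp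
next
  case False
  have "open {q::complex\<times>complex. sin (snd q - b) \<noteq> 0}"
    by (rule open_Collect_neq) (intro continuous_intros)+
  then have ev: "eventually (\<lambda>q. sin (snd q - b) \<noteq> 0) (nhds p)"
    using eventually_nhds_in_open False by fastforce
  have "eventually (\<lambda>q. AA (fst q) (snd q) =
      sin (snd q - b + fst q * of_real (chi (snd q) - 1)) / sin (snd q - b)) (nhds p)"
    by (rule eventually_mono[OF ev]) (simp add: AA_def)
  then have e: "isCont (\<lambda>q. AA (fst q) (snd q)) p \<longleftrightarrow>
      isCont (\<lambda>q. sin (snd q - b + fst q * of_real (chi (snd q) - 1)) / sin (snd q - b)) p"
    by (rule isCont_cong)
  have "isCont (\<lambda>q. chi (snd q)) p" by (rule isCont_pt_snd[OF chi_cont_at])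
  then have "isCont (\<lambda>q. sin (snd q - b + fst q * of_real (chi (snd q) - 1)) / sin (snd q - b)) p"
    using False by (intro continuous_intros) auto
  with e show ?thesis by simp
qed

lemma AA_cont2: "isCont (\<lambda>p. AA (fst p) (- snd p)) p"
proof -
  have "isCont (\<lambda>p. AA (fst p) (snd p)) ((\<lambda>p. (fst p, - snd p)) p)" by (rule AA_cont)
  then have "isCont ((\<lambda>p. AA (fst p) (snd p)) \<circ> (\<lambda>p. (fst p, - snd p))) p"
    by (intro continuous_at_compose) (auto intro!: continuous_intros)
  then show ?thesis by (simp add: o_def)
qed

lemma AA_near1: "\<exists>\<eta>>0. \<eta> \<le> r/4 \<and> (\<forall>d z. norm d < \<eta> \<longrightarrow> norm (AA d z - 1) < 1)"
proof -
  define K where "K = 1 + 4 / r"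
  have K: "K > 0"
  proof -
    have "0 < 4/r" using r_pos by simp
    then show ?thesis unfolding K_def by linarith
  qed
  have "isCont sin (0::complex)" by simp
  then obtain e1 where e1: "e1 > 0" "\<And>x::complex. dist x 0 < e1 \<Longrightarrow> dist (sin x) (sin 0) < 1 / (2*K)"
  proof -
    have p1: "0 < 1/(2*K)" using K by simp
    from \<open>isCont sin (0::complex)\<close>[unfolded continuous_at_eps_delta, rule_format, OF p1]
    show ?thesis using that by blast
  qed
  have "isCont cos (0::complex)" by simp
  then obtain e2 where e2: "e2 > 0" "\<And>x::complex. dist x 0 < e2 \<Longrightarrow> dist (cos x) (cos 0) < 1/2"
  proof -
    have p1: "0 < (1::real)/2" by simp
    from \<open>isCont cos (0::complex)\<close>[unfolded continuous_at_eps_delta, rule_format, OF p1]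
    show ?thesis using that by blast
  qed
  define \<eta> where "\<eta> = min (r/4) (min e1 e2 / 2)"
  have eta: "\<eta> > 0" "\<eta> \<le> r/4" using r_pos e1 e2 by (auto simp: \<eta>_def)
  have "norm (AA d z - 1) < 1" if d: "norm d < \<eta>" for d z
  proof (cases "sin (z - b) = 0 \<or> chi z = 1")
    case True then show ?thesis by (auto simp: AA_def)
  next
    case False
    then have s0: "sin (z - b) \<noteq> 0" and c1: "chi z \<noteq> 1" by auto
    define w where "w = z - b"
    define \<epsilon> where "\<epsilon> = d * of_real (chi z - 1)"
    have "norm \<epsilon> = norm d * \<bar>chi z - 1\<bar>" unfolding \<epsilon>_def by (simp only: norm_mult norm_of_real)
    also have "\<dots> \<le> norm d * 2" using chi_bound[of z] by (intro mult_left_mono) auto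
    also have "\<dots> < min e1 e2" using d by (simp add: \<eta>_def)
    finally have eps: "norm \<epsilon> < e1" "norm \<epsilon> < e2" by auto
    have se: "norm (sin \<epsilon>) < 1/(2*K)" using e1(2)[of \<epsilon>] eps by (simp add: dist_norm)
    have ce: "norm (cos \<epsilon> - 1) < 1/2" using e2(2)[of \<epsilon>] eps by (simp add: dist_norm)
    have "r < dp z" by (rule chi_ne_one[OF c1])
    then have sw: "r/4 \<le> norm (sin w)" unfolding w_def dp_def
      by (intro norm_sin_lower) (use r_pos r_le1 in auto)
    have sw0: "norm (sin w) > 0" using sw r_pos by linarith
    have "AA d z - 1 = (sin (w + \<epsilon>) - sin w) / sin w"
      using s0 by (simp add: AA_def w_def \<epsilon>_def field_simps)
    also have "sin (w + \<epsilon>) - sin w = sin w * (cos \<epsilon> - 1) + cos w * sin \<epsilon>"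
      by (simp add: sin_add algebra_simps)
    finally have eq: "AA d z - 1 = (cos \<epsilon> - 1) + cos w / sin w * sin \<epsilon>"
      using s0 by (simp add: w_def field_simps)
    have cw: "norm (cos w / sin w) \<le> K"
    proof -
      have "norm (cos w / sin w) = norm (cos w) / norm (sin w)" by (simp add: norm_divide)
      also have "\<dots> \<le> (1 + norm (sin w)) / norm (sin w)"
        by (rule divide_right_mono[OF norm_cos_le_sin]) simp
      also have "\<dots> = 1 / norm (sin w) + 1" using sw0 by (simp add: field_simps)
      also have "1 / norm (sin w) \<le> 1 / (r/4)" using sw r_pos sw0 by (intro divide_left_mono) (auto intro: mult_pos_pos)
      finally show ?thesis by (simp add: K_def)
    qed
    have "norm (cos w / sin w * sin \<epsilon>) \<le> K * norm (sin \<epsilon>)"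
      unfolding norm_mult by (rule mult_right_mono[OF cw]) simp
    also have "\<dots> < K * (1/(2*K))" using se K by (intro mult_strict_left_mono) auto
    also have "\<dots> = 1/2" using K by simp
    finally have t2: "norm (cos w / sin w * sin \<epsilon>) < 1/2" .
    have "norm (AA d z - 1) \<le> norm (cos \<epsilon> - 1) + norm (cos w / sin w * sin \<epsilon>)"
      unfolding eq by (rule norm_triangle_ineq)
    with ce t2 show ?thesis by linarith
  qed
  with eta show ?thesis by blast
qed

definition mm :: "complex \<Rightarrow> complex \<Rightarrow> complex" where
  "mm d z = csqrt (AA d z) * csqrt (AA d (- z))"

lemma mm_even: "mm d (- z) = mm d z"
  by (simp add: mm_def mult.commute)

lemma mm_sq: "mm d z ^ 2 = AA d z * AA d (- z)"
  by (simp add: mm_def power_mult_distrib)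

definition NN :: "complex \<Rightarrow> complex \<Rightarrow> complex" where
  "NN d z = (if z = 0 then 1 else z / rho d z)"

lemma rho_nz: "norm d \<le> r/4 \<Longrightarrow> z \<noteq> 0 \<Longrightarrow> rho d z \<noteq> 0"
  using rho_inj[of d z 0] rho_zero by auto

lemma NN_nz: "norm d \<le> r/4 \<Longrightarrow> NN d z \<noteq> 0"
  by (simp add: NN_def rho_nz)

lemma NN_even: "NN d (- z) = NN d z"
  by (simp add: NN_def rho_odd)

lemma NN_sq: "norm d \<le> r/4 \<Longrightarrow> rho d z ^ 2 * NN d z ^ 2 = z ^ 2"
  by (cases "z = 0") (auto simp: NN_def rho_zero rho_nz power_divide)

lemma rho_cont_at: "isCont (\<lambda>p. rho (fst p) (snd p)) p"
proof -
  have "isCont (\<lambda>q. chi (snd q)) p" by (rule isCont_pt_snd[OF chi_cont_at])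
  then show ?thesis unfolding rho_def by (intro continuous_intros)
qed

lemma NN_cont:
  assumes d: "norm (fst p) < r/4"
  shows "isCont (\<lambda>p. NN (fst p) (snd p)) p"
proof (cases "snd p = 0")
  case True
  have "open {q::complex\<times>complex. norm (snd q) < r}"
    by (rule open_Collect_less) (intro continuous_intros)+
  moreover have "p \<in> {q. norm (snd q) < r}" using True r_pos by simp
  ultimately have ev0: "eventually (\<lambda>q. q \<in> {q. norm (snd q) < r}) (nhds p)"
    by (rule eventually_nhds_in_open)
  then have ev: "eventually (\<lambda>q. norm (snd q) < r) (nhds p)" by simp
  have "eventually (\<lambda>q. NN (fst q) (snd q) = 1) (nhds p)"
    by (rule eventually_mono[OF ev]) (simp add: NN_def rho_small)
  then have "isCont (\<lambda>q. NN (fst q) (snd q)) p \<longleftrightarrow> isCont (\<lambda>q. 1::complex) p"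
    by (rule isCont_cong)
  then show ?thesis by simp
next
  case False
  have "open {q::complex\<times>complex. snd q \<noteq> 0}"
    by (rule open_Collect_neq) (intro continuous_intros)+
  moreover have "p \<in> {q. snd q \<noteq> 0}" using False by simp
  ultimately have ev0: "eventually (\<lambda>q. q \<in> {q. snd q \<noteq> 0}) (nhds p)"
    by (rule eventually_nhds_in_open)
  then have ev: "eventually (\<lambda>q. snd q \<noteq> 0) (nhds p)" by simp
  have "eventually (\<lambda>q. NN (fst q) (snd q) = snd q / rho (fst q) (snd q)) (nhds p)"
    by (rule eventually_mono[OF ev]) (simp add: NN_def)
  then have e: "isCont (\<lambda>q. NN (fst q) (snd q)) p \<longleftrightarrow> isCont (\<lambda>q. snd q / rho (fst q) (snd q)) p"
    by (rule isCont_cong)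
  have nz: "rho (fst p) (snd p) \<noteq> 0" by (rule rho_nz) (use d False in auto)
  have cs: "isCont snd p" by (intro continuous_intros)
  have "isCont (\<lambda>q. snd q / rho (fst q) (snd q)) p" by (rule isCont_divide[OF cs rho_cont_at nz])
  with e show ?thesis by (simp only:)
qed

end



lemma csqrt_sq_cases: "csqrt (w^2) = w \<or> csqrt (w^2) = - w"
proof -
  have "(csqrt (w^2) - w) * (csqrt (w^2) + w) = 0"
    by (simp add: algebra_simps power2_eq_square[symmetric])
  then have "csqrt (w^2) - w = 0 \<or> csqrt (w^2) + w = 0" by (simp only: mult_eq_0_iff)
  then show ?thesis by (metis add_eq_0_iff2 diff_eq_eq add_0)
qed

lemma dist_pair_le: "dist (a, b) (c, d) \<le> dist a c + dist b d"
  unfolding dist_Pair_Pair using sqrt_sum_squares_le_sum_abs[of "dist a c" "dist b d"] by simp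

lemma cont_even_csqrt:
  fixes G :: "complex \<times> complex \<Rightarrow> 'b::metric_space"
  assumes cont: "continuous_on (D \<times> UNIV) G"
    and even: "\<And>d z. d \<in> D \<Longrightarrow> G (d, - z) = G (d, z)"
  shows "continuous_on (D \<times> UNIV) (\<lambda>p. G (fst p, csqrt (snd p)))"
proof (rule continuous_on_iff[THEN iffD2], intro ballI allI impI)
  fix p :: "complex \<times> complex" and e :: real
  assume p: "p \<in> D \<times> UNIV" and e: "0 < e"
  define z0 where "z0 = csqrt (snd p)"
  have pz: "(fst p, z0) \<in> D \<times> UNIV" using p by auto
  obtain \<delta>1 where d1: "\<delta>1 > 0" "\<And>q. q \<in> D \<times> UNIV \<Longrightarrow> dist q (fst p, z0) < \<delta>1 \<Longrightarrow> dist (G q) (G (fst p, z0)) < e"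
    using cont[unfolded continuous_on_iff, rule_format, OF pz e] by blast
  define \<delta> where "\<delta> = min (\<delta>1/2) ((\<delta>1/2)^2)"
  have dpos: "\<delta> > 0" using d1 by (simp add: \<delta>_def)
  show "\<exists>\<delta>>0. \<forall>p'\<in>D \<times> UNIV. dist p' p < \<delta> \<longrightarrow> dist (G (fst p', csqrt (snd p'))) (G (fst p, csqrt (snd p))) < e"
  proof (rule exI[of _ \<delta>], rule conjI[OF dpos], intro ballI impI)
    fix p' assume p': "p' \<in> D \<times> UNIV" and dd: "dist p' p < \<delta>"
    define w where "w = csqrt (snd p')"
    have h1: "dist (fst p') (fst p) < \<delta>1/2" using dd dist_fst_le[of p' p] by (simp add: \<delta>_def)
    have h2: "norm (snd p' - snd p) < (\<delta>1/2)^2" using dd dist_snd_le[of p' p] by (simp add: \<delta>_def dist_norm)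
    have "(w - z0) * (w + z0) = snd p' - snd p"
      by (simp add: w_def z0_def algebra_simps power2_eq_square[symmetric])
    then have prod: "norm (w - z0) * norm (w + z0) < (\<delta>1/2)^2" using h2 by (simp flip: norm_mult)
    obtain w' where w': "w' = w \<or> w' = - w" "norm (w' - z0) < \<delta>1/2"
    proof (cases "norm (w - z0) < \<delta>1/2")
      case True then show ?thesis using that by blast
    next
      case False
      have "norm (w + z0) < \<delta>1/2"
      proof (rule ccontr)
        assume "\<not> norm (w + z0) < \<delta>1/2"
        then have "(\<delta>1/2) * (\<delta>1/2) \<le> norm (w - z0) * norm (w + z0)"
          using False d1 by (intro mult_mono) auto
        then show False using prod by (simp add: power2_eq_square)
      qed
      moreover have "norm (- w - z0) = norm (w + z0)"
      proof -
        have "- w - z0 = - (w + z0)" by simp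
        then show ?thesis by (simp only: norm_minus_cancel)
      qed
      ultimately have "norm (- w - z0) < \<delta>1/2" by simp
      then show ?thesis using that[of "- w"] by simp
    qed
    have fd: "fst p' \<in> D" using p' by auto
    have "G (fst p', w') = G (fst p', w)" using w'(1) even[OF fd] by auto
    moreover have "dist (fst p', w') (fst p, z0) < \<delta>1"
      using dist_pair_le[of "fst p'" w' "fst p" z0] h1 w'(2) by (simp add: dist_norm)
    then have "dist (G (fst p', w')) (G (fst p, z0)) < e" using d1(2) fd by auto
    ultimately show "dist (G (fst p', csqrt (snd p'))) (G (fst p, csqrt (snd p))) < e"
      by (simp add: w_def z0_def)
  qed
qed

locale geo2 = geo +
  fixes \<eta> :: real and isD :: bool
  assumes eta_pos: "0 < \<eta>" and eta_le: "\<eta> \<le> r/4"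
    and near: "\<And>d z. norm d < \<eta> \<Longrightarrow> norm (AA d z - 1) < 1"
begin

abbreviation DD where "DD \<equiv> ball (0::complex) \<eta>"

lemma DD_le: "d \<in> DD \<Longrightarrow> norm d \<le> r/4"
  using eta_le by auto

lemma AA_nz: "norm d < \<eta> \<Longrightarrow> AA d z \<noteq> 0"
  using near[of d z] by auto

definition MM :: "complex \<Rightarrow> complex \<Rightarrow> complex" where
  "MM d z = mm d z * (if isD then NN d z else 1)"

lemma MM_even: "MM d (- z) = MM d z"
  by (simp add: MM_def mm_even NN_even)

lemma MM_nz: "norm d < \<eta> \<Longrightarrow> MM d z \<noteq> 0"
  using AA_nz[of d z] AA_nz[of d "-z"] NN_nz[of d z] eta_le
  by (auto simp: MM_def mm_def)

lemma MM_sq: "norm d < \<eta> \<Longrightarrow>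
   (if isD then rho d z ^ 2 else 1) * MM d z ^ 2 = AA d z * AA d (- z) * (if isD then z ^ 2 else 1)"
proof -
  assume d: "norm d < \<eta>"
  then have d': "norm d \<le> r/4" using eta_le by simp
  show ?thesis
  proof (cases isD)
    case True
    have "rho d z ^ 2 * MM d z ^ 2 = mm d z ^ 2 * (rho d z ^ 2 * NN d z ^ 2)"
      unfolding MM_def using True by (simp add: power_mult_distrib)
    also have "\<dots> = AA d z * AA d (- z) * z ^ 2" by (simp add: mm_sq NN_sq[OF d'])
    finally show ?thesis using True by simp
  next
    case False then show ?thesis unfolding MM_def by (simp add: mm_sq)
  qed
qed

lemma mm_cont_at: "norm (fst p) < \<eta> \<Longrightarrow> isCont (\<lambda>p. mm (fst p) (snd p)) p"
  unfolding mm_def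
  by (intro isCont_mult isCont_csqrt' AA_cont AA_cont2 not_nonpos_if_near1 near)

lemma MM_cont_at: "norm (fst p) < \<eta> \<Longrightarrow> isCont (\<lambda>p. MM (fst p) (snd p)) p"
proof -
  assume d: "norm (fst p) < \<eta>"
  have "isCont (\<lambda>p. NN (fst p) (snd p)) p" by (rule NN_cont) (use d eta_le in auto)
  then show ?thesis unfolding MM_def using mm_cont_at[OF d] by (cases isD) (auto intro: isCont_mult)
qed

lemma open_DD: "open (DD \<times> (UNIV::'a::topological_space set))"
  by (intro open_Times) auto

lemma cont_on_DD:
  fixes f :: "complex \<times> 'a::t2_space \<Rightarrow> 'b::topological_space"
  assumes "\<And>p. norm (fst p) < \<eta> \<Longrightarrow> isCont f p"
  shows "continuous_on (DD \<times> UNIV) f"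
proof (subst continuous_on_eq_continuous_at[OF open_DD], intro ballI)
  fix p :: "complex \<times> 'a" assume "p \<in> DD \<times> UNIV"
  then have "norm (fst p) < \<eta>" by (auto simp: mem_Times_iff)
  then show "isCont f p" by (rule assms)
qed

lemma G1_cont: "continuous_on (DD \<times> UNIV) (\<lambda>p. rho (fst p) (snd p) ^ 2)"
  by (rule cont_on_DD) (intro continuous_intros rho_cont_at)

lemma G2_cont: "continuous_on (DD \<times> UNIV) (\<lambda>p. MM (fst p) (snd p))"
  by (rule cont_on_DD) (rule MM_cont_at)

lemma sig_cont_DD: "continuous_on (DD \<times> UNIV) (\<lambda>p. sig (fst p) (snd p))"
  by (rule continuous_on_subset[OF sig_cont]) (use eta_le in auto)

lemma G3_cont: "continuous_on (DD \<times> UNIV) (\<lambda>p. sig (fst p) (snd p) ^ 2)"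
  by (intro continuous_intros sig_cont_DD)

lemma G4_cont: "continuous_on (DD \<times> UNIV) (\<lambda>p. MM (fst p) (sig (fst p) (snd p)))"
proof -
  have "continuous_on (DD \<times> UNIV) (\<lambda>p. (fst p, sig (fst p) (snd p)))"
    by (intro continuous_intros sig_cont_DD)
  moreover have "(\<lambda>p. (fst p, sig (fst p) (snd p))) ` (DD \<times> UNIV) \<subseteq> DD \<times> UNIV" by auto
  ultimately show ?thesis using continuous_on_compose2[OF G2_cont] by fastforce
qed

end



context geo2 begin

definition Th :: "complex \<Rightarrow> complex \<times> complex \<Rightarrow> complex \<times> complex" where
  "Th d p = ((rho d (csqrt (fst p)))^2, snd p * MM d (csqrt (fst p)))"

definition Thi :: "complex \<Rightarrow> complex \<times> complex \<Rightarrow> complex \<times> complex" where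
  "Thi d p = ((sig d (csqrt (fst p)))^2, snd p / MM d (sig d (csqrt (fst p))))"

definition gg :: "complex \<times> complex \<Rightarrow> complex" where
  "gg p = sin (csqrt (fst p))^2 - (if isD then fst p else 1) * (snd p)^2"

definition RR :: "complex \<Rightarrow> complex \<times> complex \<Rightarrow> complex" where
  "RR d p = AA d (csqrt (fst p)) * AA d (- csqrt (fst p))"

lemma RR_nz: "norm d < \<eta> \<Longrightarrow> RR d p \<noteq> 0"
  by (simp add: RR_def AA_nz)

lemma Thi_Th:
  assumes d: "norm d < \<eta>"
  shows "Thi d (Th d p) = p"
proof -
  have d': "norm d \<le> r/4" using d eta_le by simp
  define z where "z = csqrt (fst p)"
  obtain z' where z': "z' = z \<or> z' = - z" "csqrt ((rho d z)^2) = rho d z'"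
    using csqrt_sq_cases[of "rho d z"] rho_odd[of d z] by metis
  have s: "sig d (csqrt ((rho d z)^2)) = z'" using z'(2) sig_rho[OF d'] by simp
  have sq: "z' ^ 2 = fst p" using z'(1) by (auto simp: z_def)
  have mm: "MM d z' = MM d z" using z'(1) MM_even by auto
  show ?thesis using MM_nz[OF d, of z]
    by (simp add: Th_def Thi_def s sq mm flip: z_def)
qed

lemma Th_Thi:
  assumes d: "norm d < \<eta>"
  shows "Th d (Thi d p) = p"
proof -
  have d': "norm d \<le> r/4" using d eta_le by simp
  define s where "s = sig d (csqrt (fst p))"
  obtain s' where s': "s' = s \<or> s' = - s" "csqrt (s^2) = s'"
    using csqrt_sq_cases[of s] by metis
  have "rho d s = csqrt (fst p)" using rho_sig[OF d'] by (simp add: s_def)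
  then have r: "(rho d s')^2 = fst p" using s'(1) rho_odd[of d s] by auto
  have mm: "MM d s' = MM d s" using s'(1) MM_even by auto
  show ?thesis using MM_nz[OF d, of s]
    by (simp add: Th_def Thi_def s'(2) r mm flip: s_def)
qed

lemma sin_csqrt_sq: "sin (csqrt (w^2)) ^ 2 = sin w ^ 2"
  using csqrt_sq_cases[of w] by (metis sin_minus power2_minus)

lemma gg_Th:
  assumes d: "norm d < \<eta>"
  shows "gg (Th d p) = sin (b + d)^2 + RR d p * (gg p - sin b ^2)"
proof -
  define z where "z = csqrt (fst p)"
  define R where "R = RR d p"
  have R: "R = AA d z * AA d (- z)" by (simp add: R_def RR_def z_def)
  have zx: "z^2 = fst p" by (simp add: z_def)
  have ms: "(if isD then rho d z ^ 2 else 1) * MM d z ^ 2 = R * (if isD then fst p else 1)"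
    using MM_sq[OF d, of z] by (simp add: R zx)
  have gth: "gg (Th d p) = sin (rho d z)^2 - (if isD then rho d z ^ 2 else 1) * MM d z ^ 2 * (snd p)^2"
    by (simp add: gg_def Th_def sin_csqrt_sq power_mult_distrib flip: z_def)
  have key: "sin (rho d z)^2 = sin (b + d)^2 + R * (sin z ^2 - sin b ^2)"
    using key_identity[of d z] by (simp add: R algebra_simps)
  show ?thesis unfolding gth ms key
    by (simp add: gg_def R_def z_def algebra_simps)
qed

lemma comp_pi:
  assumes "continuous_on (DD \<times> UNIV) H"
  shows "continuous_on (DD \<times> UNIV) (\<lambda>q::complex\<times>(complex\<times>complex). H (fst q, fst (snd q)))"
proof -
  have "continuous_on (DD \<times> UNIV) (\<lambda>q::complex\<times>(complex\<times>complex). (fst q, fst (snd q)))"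
    by (intro continuous_intros)
  moreover have "(\<lambda>q::complex\<times>(complex\<times>complex). (fst q, fst (snd q))) ` (DD \<times> UNIV) \<subseteq> DD \<times> UNIV"
    by auto
  ultimately show ?thesis using continuous_on_compose2[OF assms] by fastforce
qed

lemma H1: "continuous_on (DD \<times> UNIV) (\<lambda>u. rho (fst u) (csqrt (snd u)) ^ 2)"
  using cont_even_csqrt[OF G1_cont] by (simp add: rho_odd)

lemma H2: "continuous_on (DD \<times> UNIV) (\<lambda>u. MM (fst u) (csqrt (snd u)))"
  using cont_even_csqrt[OF G2_cont] by (simp add: MM_even)

lemma H3: "continuous_on (DD \<times> UNIV) (\<lambda>u. sig (fst u) (csqrt (snd u)) ^ 2)"
proof -
  have "continuous_on (DD \<times> UNIV) (\<lambda>p. (\<lambda>u. sig (fst u) (snd u) ^ 2) (fst p, csqrt (snd p)))"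
    by (rule cont_even_csqrt[OF G3_cont], frule DD_le, simp add: sig_odd)
  then show ?thesis by simp
qed

lemma H4: "continuous_on (DD \<times> UNIV) (\<lambda>u. MM (fst u) (sig (fst u) (csqrt (snd u))))"
proof -
  have "continuous_on (DD \<times> UNIV) (\<lambda>p. (\<lambda>u. MM (fst u) (sig (fst u) (snd u))) (fst p, csqrt (snd p)))"
    by (rule cont_even_csqrt[OF G4_cont], frule DD_le, simp add: sig_odd MM_even)
  then show ?thesis by simp
qed

lemma Th_cont: "continuous_on (DD \<times> UNIV) (\<lambda>q. Th (fst q) (snd q))"
proof -
  have a: "continuous_on (DD \<times> UNIV) (\<lambda>q::complex\<times>(complex\<times>complex). rho (fst q) (csqrt (fst (snd q))) ^ 2)"
    using comp_pi[OF H1] by simp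
  have b: "continuous_on (DD \<times> UNIV) (\<lambda>q::complex\<times>(complex\<times>complex). MM (fst q) (csqrt (fst (snd q))))"
    using comp_pi[OF H2] by simp
  show ?thesis unfolding Th_def by (intro continuous_intros a b)
qed

lemma Thi_cont: "continuous_on (DD \<times> UNIV) (\<lambda>q. Thi (fst q) (snd q))"
proof -
  have a: "continuous_on (DD \<times> UNIV) (\<lambda>q::complex\<times>(complex\<times>complex). sig (fst q) (csqrt (fst (snd q))) ^ 2)"
    using comp_pi[OF H3] by simp
  have b: "continuous_on (DD \<times> UNIV) (\<lambda>q::complex\<times>(complex\<times>complex). MM (fst q) (sig (fst q) (csqrt (fst (snd q)))))"
    using comp_pi[OF H4] by simp
  have nz: "\<forall>q\<in>DD \<times> UNIV. MM (fst q) (sig (fst q) (csqrt (fst (snd q)))) \<noteq> 0"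
    using MM_nz by auto
  show ?thesis unfolding Thi_def by (intro continuous_intros a b nz)
qed

end



lemma xs_sq: "x * s_fun x ^ 2 = sin (csqrt x) ^ 2"
proof (cases "x = 0")
  case True then show ?thesis by (simp add: s_fun_def)
next
  case False
  have "csqrt x ^ 2 = x" by simp
  then show ?thesis using False by (simp add: s_fun_def power_divide)
qed

lemma f_A_eq: "f_A p = sin (csqrt (fst p))^2 - (if False then fst p else 1) * (snd p)^2"
  by (simp add: f_A_def xs_sq)

lemma f_D_eq: "f_D p = sin (csqrt (fst p))^2 - (if True then fst p else 1) * (snd p)^2"
  by (simp add: f_D_def xs_sq)

lemma sin_csqrt_cont: "continuous_on UNIV (\<lambda>x. sin (csqrt x) ^ 2)"
proof -
  have "continuous_on (UNIV \<times> UNIV) (\<lambda>u::complex\<times>complex. (\<lambda>v. sin (snd v) ^ 2) (fst u, csqrt (snd u)))"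
    by (rule cont_even_csqrt) (auto intro!: continuous_intros)
  then have c: "continuous_on UNIV (\<lambda>u::complex\<times>complex. sin (csqrt (snd u)) ^ 2)" by simp
  have "continuous_on UNIV (\<lambda>x::complex. (0::complex, x))" by (intro continuous_intros)
  from continuous_on_compose2[OF c this] show ?thesis by simp
qed

lemma local_inv:
  fixes b :: complex
  assumes nz: "sin b * cos b \<noteq> 0" and eta: "\<eta> > 0"
  obtains U g where "open U" "sin b ^ 2 \<in> U" "continuous_on U g"
    "\<And>t. t \<in> U \<Longrightarrow> norm (g t - b) < \<eta> \<and> sin (g t) ^ 2 = t"
proof -
  define q where "q = (\<lambda>z::complex. sin z ^ 2)"
  have holf: "q holomorphic_on UNIV" unfolding q_def by (intro holomorphic_intros)
  have "(q has_field_derivative 2 * sin b * cos b) (at b)"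
    unfolding q_def by (auto intro!: derivative_eq_intros)
  then have "deriv q b = 2 * sin b * cos b" by (rule DERIV_imp_deriv)
  then have dnz: "deriv q b \<noteq> 0" using nz by simp
  obtain e0 where e0: "e0 > 0" "inj_on q (ball b e0)"
    using has_complex_derivative_locally_injective[OF holf _ open_UNIV dnz] by blast
  define V where "V = ball b (min e0 \<eta>)"
  have injV: "inj_on q V" using e0 by (rule_tac inj_on_subset) (auto simp: V_def)
  have nconst: "\<not> q constant_on UNIV"
  proof
    assume "q constant_on UNIV"
    then obtain c where "\<And>x. q x = c" by (auto simp: constant_on_def)
    then have "q 0 = q (of_real (pi/2))" by simp
    then show False by (simp add: q_def sin_of_real)
  qed
  have om: "open (q ` W)" if "open W" for W
    by (rule open_mapping_thm[OF holf open_UNIV connected_UNIV that subset_UNIV nconst])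
  have oV: "open V" by (simp add: V_def)
  obtain g where g: "homeomorphism V (q ` V) q g"
  proof (rule homeomorphism_injective_open_map[of V q "q ` V"])
    show "continuous_on V q" using holf holomorphic_on_imp_continuous_on continuous_on_subset by blast
    show "inj_on q V" by (rule injV)
    fix W assume "openin (top_of_set V) W"
    then have "open W" "W \<subseteq> V" using openin_open_trans[OF _ oV] openin_imp_subset by blast+
    then show "openin (top_of_set (q ` V)) (q ` W)" by (intro open_subset om) auto
  qed auto
  show ?thesis
  proof (rule that[of "q ` V" g])
    show "open (q ` V)" by (rule om[OF oV])
    show "sin b ^ 2 \<in> q ` V" using e0 eta by (auto simp: V_def q_def)
    show "continuous_on (q ` V) g" using g by (simp add: homeomorphism_def)
    fix t assume t: "t \<in> q ` V"
    have "g t \<in> V" "q (g t) = t" using g t by (auto simp: homeomorphism_def)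
    then show "norm (g t - b) < \<eta> \<and> sin (g t) ^ 2 = t"
      by (auto simp: V_def q_def dist_norm norm_minus_commute)
  qed
qed

lemma gen:
  fixes f :: "complex \<times> complex \<Rightarrow> complex"
  assumes fdef: "\<And>p. f p = sin (csqrt (fst p))^2 - (if isD then fst p else 1) * (snd p)^2"
  shows "locally_trivial_fibration f (UNIV - (f -` {0} \<union> f -` {1})) (UNIV - {0, 1})"
proof -
  define E where "E = UNIV - (f -` {0} \<union> f -` {1})"
  define B :: "complex set" where "B = UNIV - {0, 1}"
  have fcont: "continuous_on UNIV f"
  proof -
    have c1: "continuous_on UNIV (\<lambda>p::complex\<times>complex. sin (csqrt (fst p))^2)"
      by (rule continuous_on_compose2[OF sin_csqrt_cont]) (auto intro!: continuous_intros)
    have "continuous_on UNIV (\<lambda>p::complex\<times>complex. sin (csqrt (fst p))^2 - (if isD then fst p else 1) * (snd p)^2)"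
      by (cases isD) (auto intro!: continuous_intros c1)
    then show ?thesis using fdef by (simp add: fun_eq_iff[symmetric] fdef[abs_def])
  qed
  have loc: "\<exists>U (F::(complex\<times>complex) set) h k.
        openin (top_of_set B) U \<and> t0 \<in> U \<and>
        homeomorphism {p \<in> E. f p \<in> U} (U \<times> F) h k \<and>
        (\<forall>p \<in> {p \<in> E. f p \<in> U}. fst (h p) = f p)" if t0B: "t0 \<in> B" for t0
  proof -
    have t00: "t0 \<noteq> 0" "t0 \<noteq> 1" using t0B by (auto simp: B_def)
    define b where "b = Arcsin (csqrt t0)"
    have sb: "sin b = csqrt t0" by (simp add: b_def)
    have sb2: "sin b ^ 2 = t0" by (simp add: sb)
    have sbnz: "sin b \<noteq> 0" using t00 sb by auto
    have cbnz: "cos b \<noteq> 0"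
    proof
      assume "cos b = 0"
      then have "sin b ^ 2 = 1" using sin_cos_squared_add[of b] by simp
      then show False using sb2 t00 by simp
    qed
    have s2b: "sin (2 * b) \<noteq> 0" using sbnz cbnz by (simp add: sin_double)
    have bT: "b \<notin> TT" using sbnz by (simp add: sin_zero_TT[symmetric])
    have b2T: "2 * b \<notin> TT" using s2b by (simp add: sin_zero_TT[symmetric])
    define i1 where "i1 = infdist b TT"
    define i2 where "i2 = infdist (2 * b) TT"
    have i1: "i1 > 0" unfolding i1_def by (rule infdist_pos_not_in_closed[OF TT_closed TT_ne bT])
    have i2: "i2 > 0" unfolding i2_def by (rule infdist_pos_not_in_closed[OF TT_closed TT_ne b2T])
    define r where "r = min (1/8) (min (i1/3) (i2/4))"
    interpret G: geo b r
    proof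
      show "0 < r" using i1 i2 by (simp add: r_def)
      show "r \<le> 1" by (simp add: r_def)
      show "4 * r \<le> infdist (2 * b) TT" by (simp add: r_def i2_def[symmetric])
      show "3 * r \<le> infdist b TT" by (simp add: r_def i1_def[symmetric])
    qed
    obtain \<eta> where eta: "\<eta> > 0" "\<eta> \<le> r/4" "\<And>d z. norm d < \<eta> \<Longrightarrow> norm (G.AA d z - 1) < 1"
      using G.AA_near1 by blast
    interpret G2: geo2 b r \<eta> isD
      by unfold_locales (use eta in auto)
    have fgg: "f = G2.gg" by (simp add: fun_eq_iff fdef G2.gg_def)
    obtain U0 g where U0: "open U0" "sin b ^ 2 \<in> U0" "continuous_on U0 g"
      "\<And>t. t \<in> U0 \<Longrightarrow> norm (g t - b) < \<eta> \<and> sin (g t) ^ 2 = t"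
      using local_inv[of b \<eta>] sbnz cbnz eta(1) by auto
    define U where "U = U0 - {0, 1}"
    have oU: "open U" unfolding U_def using U0(1) by (intro open_Diff) auto
    have t0U: "t0 \<in> U" using U0(2) sb2 t00 by (simp add: U_def)
    have UB: "U \<subseteq> B" by (auto simp: U_def B_def)
    define del where "del t = g t - b" for t
    have delD: "norm (del t) < \<eta>" if "t \<in> U" for t using U0(4)[of t] that by (simp add: del_def U_def)
    have delS: "sin (b + del t) ^ 2 = t" if "t \<in> U" for t using U0(4)[of t] that by (simp add: del_def U_def)
    have delC: "continuous_on U del" unfolding del_def
      by (intro continuous_intros continuous_on_subset[OF U0(3)]) (auto simp: U_def)
    define F where "F = {q. G2.gg q = t0}"
    define S where "S = {p \<in> E. f p \<in> U}"
    define h where "h p = (f p, G2.Thi (del (f p)) p)" for p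
    define k where "k y = G2.Th (del (fst y)) (snd y)" for y :: "complex \<times> (complex \<times> complex)"
    have kh: "k (h p) = p" if "p \<in> S" for p
      using that G2.Th_Thi[OF delD] by (simp add: k_def h_def S_def)
    have hS: "h p \<in> U \<times> F" if "p \<in> S" for p
    proof -
      have fU: "f p \<in> U" using that by (simp add: S_def)
      define d where "d = del (f p)"
      define q where "q = G2.Thi d p"
      have d: "norm d < \<eta>" using delD[OF fU] by (simp add: d_def)
      have "G2.Th d q = p" unfolding q_def by (rule G2.Th_Thi[OF d])
      then have "f p = sin (b + d)^2 + G2.RR d q * (G2.gg q - sin b ^2)"
        using G2.gg_Th[OF d, of q] by (simp add: fgg)
      moreover have "sin (b + d)^2 = f p" using delS[OF fU] by (simp add: d_def)
      ultimately have "G2.RR d q * (G2.gg q - t0) = 0" using sb2 by simp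
      then have "G2.gg q = t0" using G2.RR_nz[OF d] by simp
      then show ?thesis using fU by (simp add: h_def F_def q_def d_def)
    qed
    have kS: "k y \<in> S" and hk: "h (k y) = y" if "y \<in> U \<times> F" for y
    proof -
      define t where "t = fst y"
      define q where "q = snd y"
      have y: "y = (t, q)" "t \<in> U" "G2.gg q = t0" using that by (auto simp: t_def q_def F_def mem_Times_iff)
      have d: "norm (del t) < \<eta>" by (rule delD[OF y(2)])
      have "f (G2.Th (del t) q) = sin (b + del t)^2 + G2.RR (del t) q * (G2.gg q - sin b ^2)"
        using G2.gg_Th[OF d, of q] by (simp add: fgg)
      also have "\<dots> = t" using delS[OF y(2)] y(3) sb2 by simp
      finally have fk: "f (k y) = t" by (simp add: k_def y(1))
      have "t \<noteq> 0" "t \<noteq> 1" using y(2) by (auto simp: U_def)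
      then show "k y \<in> S" using fk y(2) by (simp add: S_def E_def)
      show "h (k y) = y" using fk G2.Thi_Th[OF d] by (simp add: h_def k_def y(1))
    qed
    have himg: "h ` S = U \<times> F"
    proof
      show "h ` S \<subseteq> U \<times> F" using hS by (simp add: image_subset_iff)
      show "U \<times> F \<subseteq> h ` S"
      proof
        fix y
        assume y: "y \<in> U \<times> F"
        then have "h (k y) = y" "k y \<in> S" using kS hk by auto
        then show "y \<in> h ` S" by (metis image_eqI)
      qed
    qed
    have kimg: "k ` (U \<times> F) = S"
    proof
      show "k ` (U \<times> F) \<subseteq> S" using kS by (simp add: image_subset_iff)
      show "S \<subseteq> k ` (U \<times> F)"
      proof
        fix p assume "p \<in> S"
        then have "k (h p) = p" "h p \<in> U \<times> F" using hS kh by auto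
        then show "p \<in> k ` (U \<times> F)" by (metis image_eqI)
      qed
    qed
    have hcont: "continuous_on S h"
    proof -
      have fS: "continuous_on S f" using fcont continuous_on_subset by blast
      have dS: "continuous_on S (\<lambda>p. del (f p))"
        by (rule continuous_on_compose2[OF delC fS]) (auto simp: S_def)
      have "continuous_on S (\<lambda>p. (del (f p), p))" by (intro continuous_intros dS)
      moreover have "(\<lambda>p. (del (f p), p)) ` S \<subseteq> G2.DD \<times> UNIV"
        using delD by (auto simp: S_def)
      ultimately have "continuous_on S (\<lambda>p. (\<lambda>q. G2.Thi (fst q) (snd q)) (del (f p), p))"
        using continuous_on_compose2[OF G2.Thi_cont] by blast
      then have "continuous_on S (\<lambda>p. G2.Thi (del (f p)) p)" by simp
      then show ?thesis unfolding h_def by (intro continuous_intros fS)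
    qed
    have kcont: "continuous_on (U \<times> F) k"
    proof -
      have "continuous_on (U \<times> F) (\<lambda>y. del (fst y))"
        by (rule continuous_on_compose2[OF delC]) (auto intro!: continuous_intros)
      then have "continuous_on (U \<times> F) (\<lambda>y::complex\<times>(complex\<times>complex). (del (fst y), snd y))"
        by (intro continuous_intros)
      moreover have "(\<lambda>y::complex\<times>(complex\<times>complex). (del (fst y), snd y)) ` (U \<times> F) \<subseteq> G2.DD \<times> UNIV"
        using delD by auto
      ultimately have "continuous_on (U \<times> F) (\<lambda>y. (\<lambda>q. G2.Th (fst q) (snd q)) (del (fst y), snd y))"
        using continuous_on_compose2[OF G2.Th_cont] by blast
      then show ?thesis by (simp add: k_def)
    qed
    have hom: "homeomorphism S (U \<times> F) h k"
      by (simp add: homeomorphism_def kh hk himg kimg hcont kcont)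
    have fsth: "\<forall>p \<in> S. fst (h p) = f p" by (simp add: h_def)
    have all: "openin (top_of_set B) U \<and> t0 \<in> U \<and> homeomorphism {p \<in> E. f p \<in> U} (U \<times> F) h k \<and>
        (\<forall>p \<in> {p \<in> E. f p \<in> U}. fst (h p) = f p)"
      using open_subset[OF UB oU] t0U hom fsth by (simp add: S_def)
    show ?thesis
      by (rule exI[of _ U], rule exI[of _ F], rule exI[of _ h], rule exI[of _ k]) (rule all)
  qed
  show ?thesis unfolding locally_trivial_fibration_def
  proof (intro conjI)
    show "f ` (UNIV - (f -` {0} \<union> f -` {1})) \<subseteq> UNIV - {0, 1}" by auto
    show "continuous_on (UNIV - (f -` {0} \<union> f -` {1})) f" using fcont continuous_on_subset by blast
    show "\<forall>b\<in>UNIV - {0, 1}. \<exists>U (F::(complex\<times>complex) set) h k. openin (top_of_set (UNIV - {0, 1})) U \<and> b \<in> U \<and>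
       homeomorphism {p \<in> UNIV - (f -` {0} \<union> f -` {1}). f p \<in> U} (U \<times> F) h k \<and>
       (\<forall>p\<in>{p \<in> UNIV - (f -` {0} \<union> f -` {1}). f p \<in> U}. fst (h p) = f p)"
    proof (intro ballI)
      fix t0 assume "t0 \<in> UNIV - {0::complex, 1}"
      then have "t0 \<in> B" by (simp add: B_def)
      from loc[OF this] show "\<exists>U (F::(complex\<times>complex) set) h k. openin (top_of_set (UNIV - {0, 1})) U \<and> t0 \<in> U \<and>
       homeomorphism {p \<in> UNIV - (f -` {0} \<union> f -` {1}). f p \<in> U} (U \<times> F) h k \<and>
       (\<forall>p\<in>{p \<in> UNIV - (f -` {0} \<union> f -` {1}). f p \<in> U}. fst (h p) = f p)"
        by (simp only: E_def B_def)
    qed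
  qed
qed

theorem theorem3:
  assumes "f \<in> {f_A, f_D}"
  shows "locally_trivial_fibration f (UNIV - (f -` {0} \<union> f -` {1})) (UNIV - {0, 1})"
proof -
  from assms consider "f = f_A" | "f = f_D" by blast
  then show ?thesis
  proof cases
    case 1 then show ?thesis using gen[of f False] f_A_eq by blast
  next
    case 2 then show ?thesis using gen[of f True] f_D_eq by blast
  qed
qed


end
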